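(* Let $S$ be a semigroup with finite $\mathcal{R}$-height, and let $A$ be a right ideal of $S$. Then $\mathrm{H}_{\mathcal{R}}(A)\leq 2\,\mathrm{H}_{\mathcal{R}}(S)-1$.
   Context: For a semigroup $S$, $S^1$ denotes $S$ with an identity adjoined if necessary. Green's preorder: $a\leq_{\mathcal{R}} b$ iff $aS^1\subseteq bS^1$; $\mathcal{R}$ is the associated equivalence; the $\mathcal{R}$-height $\mathrm{H}_{\mathcal{R}}$ of a semigroup is the supremum of the cardinalities of chains in its poset of $\mathcal{R}$-classes. A right ideal is a non-empty subset $A$ with $AS\subseteq A$; $\mathrm{H}_{\mathcal{R}}(A)$ is computed in $A$ itself. *)

theory Defs
  imports Main "HOL-Library.Extended_Nat"
begin

text \<open>Semigroups are modelled by the type class semigroup_mult; the semigroup S is the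
whole type (UNIV). Green's notions are relativised to a subsemigroup T (closed set),
so that they can be computed inside a right ideal A itself.\<close>

definition right_ideal :: "'a::semigroup_mult set \<Rightarrow> bool" where
  "right_ideal A \<longleftrightarrow> A \<noteq> {} \<and> (\<forall>a\<in>A. \<forall>s. a * s \<in> A)"

definition princ_right :: "'a::semigroup_mult set \<Rightarrow> 'a \<Rightarrow> 'a set" where
  "princ_right T a = insert a ((\<lambda>t. a * t) ` T)"

definition R_le :: "'a::semigroup_mult set \<Rightarrow> 'a \<Rightarrow> 'a \<Rightarrow> bool" where
  "R_le T a b \<longleftrightarrow> princ_right T a \<subseteq> princ_right T b"

definition R_class :: "'a::semigroup_mult set \<Rightarrow> 'a \<Rightarrow> 'a set" where
  "R_class T a = {b \<in> T. R_le T a b \<and> R_le T b a}"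

definition R_classes :: "'a::semigroup_mult set \<Rightarrow> 'a set set" where
  "R_classes T = R_class T ` T"

definition R_class_le :: "'a::semigroup_mult set \<Rightarrow> 'a set \<Rightarrow> 'a set \<Rightarrow> bool" where
  "R_class_le T X Y \<longleftrightarrow> (\<exists>a\<in>X. \<exists>b\<in>Y. R_le T a b)"

definition R_chain :: "'a::semigroup_mult set \<Rightarrow> 'a set set \<Rightarrow> bool" where
  "R_chain T C \<longleftrightarrow> C \<subseteq> R_classes T \<and>
     (\<forall>X\<in>C. \<forall>Y\<in>C. R_class_le T X Y \<or> R_class_le T Y X)"

text \<open>R-height: supremum of cardinalities of chains of R-classes (as an extended natural;
an infinite chain makes the supremum over its finite subchains infinite).\<close>
definition R_height :: "'a::semigroup_mult set \<Rightarrow> enat" where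
  "R_height T = Sup {enat (card C) | C. finite C \<and> R_chain T C}"

end

theory Submission
  imports Defs
begin

lemma R_le_refl: "R_le T a a" by (simp add: R_le_def)

lemma R_le_trans: "R_le T a b \<Longrightarrow> R_le T b c \<Longrightarrow> R_le T a c"
  unfolding R_le_def by blast

lemma right_ideal_UNIV: "right_ideal (UNIV :: 'a::semigroup_mult set)"
  by (simp add: right_ideal_def)

lemma R_le_iff:
  assumes "right_ideal A"
  shows "R_le A a b \<longleftrightarrow> a = b \<or> (\<exists>y\<in>A. a = b * y)"
proof
  assume "R_le A a b"
  then have "a \<in> princ_right A b" unfolding R_le_def princ_right_def by blast
  thus "a = b \<or> (\<exists>y\<in>A. a = b * y)" by (auto simp: princ_right_def)
next
  assume h: "a = b \<or> (\<exists>y\<in>A. a = b * y)"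
  show "R_le A a b" unfolding R_le_def princ_right_def
  proof
    fix z assume "z \<in> insert a ((*) a ` A)"
    then consider "z = a" | t where "t \<in> A" "z = a * t" by auto
    then show "z \<in> insert b ((*) b ` A)"
    proof cases
      case 1 with h show ?thesis by auto
    next
      case 2
      show ?thesis
      proof (cases "a = b")
        case True with 2 show ?thesis by auto
      next
        case False
        with h obtain y where y: "y \<in> A" "a = b * y" by auto
        have "y * t \<in> A" using assms y(1) unfolding right_ideal_def by blast
        moreover have "z = b * (y * t)" using 2 y by (simp add: mult.assoc)
        ultimately show ?thesis by blast
      qed
    qed
  qed
qed

lemma R_le_UNIV_iff: "R_le UNIV a b \<longleftrightarrow> a = b \<or> (\<exists>s. a = b * s)"
  using R_le_iff[OF right_ideal_UNIV] by simp

lemma F1: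
  assumes "right_ideal A" "R_le A a b"
  shows "R_le UNIV a b"
  using assms by (auto simp: R_le_iff R_le_UNIV_iff)

lemma F2:
  assumes A: "right_ideal A" and "R_le A c b" and "R_le UNIV a c"
  shows "R_le A b c \<or> R_le A a b"
proof (cases "c = b")
  case True then show ?thesis by (simp add: R_le_refl)
next
  case False
  with assms obtain y where y: "y \<in> A" "c = b * y" by (auto simp: R_le_iff)
  from assms(3) consider "a = c" | s where "a = c * s" by (auto simp: R_le_UNIV_iff)
  then show ?thesis
  proof cases
    case 1 then show ?thesis using y A by (auto simp: R_le_iff)
  next
    case 2
    have "y * s \<in> A" using A y(1) unfolding right_ideal_def by blast
    moreover have "a = b * (y * s)" using 2 y by (simp add: mult.assoc)
    ultimately show ?thesis using A by (auto simp: R_le_iff)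
  qed
qed

lemma F3:
  assumes A: "right_ideal A" and "R_le A c1 c2" and "R_le UNIV c2 c1" and "\<not> R_le A c2 c1"
  shows "\<exists>d. R_le UNIV d c1 \<and> \<not> R_le UNIV c1 d"
proof -
  have "c1 \<noteq> c2" using assms(4) R_le_refl by metis
  with assms obtain y where y: "y \<in> A" "c1 = c2 * y" by (auto simp: R_le_iff)
  from assms(3) \<open>c1 \<noteq> c2\<close> obtain s where s: "c2 = c1 * s" by (auto simp: R_le_UNIV_iff)
  have "\<not> R_le UNIV c1 (c1 * y)"
  proof
    assume "R_le UNIV c1 (c1 * y)"
    then consider "c1 = c1 * y" | s' where "c1 = c1 * y * s'" by (auto simp: R_le_UNIV_iff)
    then show False
    proof cases
      case 1
      have "y * s \<in> A" using A y(1) unfolding right_ideal_def by blast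
      moreover have "c2 = c1 * (y * s)" using 1 s by (metis mult.assoc)
      ultimately show False using assms(4) A by (auto simp: R_le_iff)
    next
      case 2
      have "y * s' * s \<in> A" using A y(1) unfolding right_ideal_def by blast
      moreover have "c2 = c1 * (y * s' * s)" using 2 s by (metis mult.assoc)
      ultimately show False using assms(4) A by (auto simp: R_le_iff)
    qed
  qed
  moreover have "R_le UNIV (c1 * y) c1" by (auto simp: R_le_UNIV_iff)
  ultimately show ?thesis by blast
qed

lemma chain_max:
  assumes "finite P" "P \<noteq> {}" "\<forall>x\<in>P. \<forall>y\<in>P. R_le T x y \<or> R_le T y x"
  shows "\<exists>m\<in>P. \<forall>x\<in>P. R_le T x m"
  using assms
proof (induction P rule: finite_ne_induct)
  case (singleton x) then show ?case by (auto simp: R_le_refl)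
next
  case (insert x F)
  then obtain m where m: "m \<in> F" "\<forall>z\<in>F. R_le T z m" by auto
  show ?case
  proof (cases "R_le T x m")
    case True then show ?thesis using m by auto
  next
    case False
    then have "R_le T m x" using insert.prems m(1) by auto
    then show ?thesis using m R_le_trans R_le_refl by blast
  qed
qed

definition goodQ :: "'a::semigroup_mult set \<Rightarrow> bool" where
  "goodQ Q \<longleftrightarrow> finite Q \<and> (\<forall>x\<in>Q. \<forall>y\<in>Q. R_le UNIV x y \<or> R_le UNIV y x)
     \<and> (\<forall>x\<in>Q. \<forall>y\<in>Q. R_le UNIV x y \<and> R_le UNIV y x \<longrightarrow> x = y)"

lemma goodQ_empty: "goodQ {}" by (simp add: goodQ_def)

lemma goodQ_insert:
  assumes "goodQ Q" "\<forall>q\<in>Q. R_le UNIV q a \<and> \<not> R_le UNIV a q"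
  shows "goodQ (insert a Q)" "a \<notin> Q" "card (insert a Q) = card Q + 1"
proof -
  show "a \<notin> Q" using assms(2) R_le_refl by metis
  then show "card (insert a Q) = card Q + 1" using assms(1) by (simp add: goodQ_def)
  show "goodQ (insert a Q)" using assms unfolding goodQ_def by (auto simp: R_le_refl)
qed

lemma key:
  assumes A: "right_ideal A"
  shows "finite P \<Longrightarrow> P \<noteq> {} \<Longrightarrow> \<forall>x\<in>P. \<forall>y\<in>P. R_le A x y \<or> R_le A y x \<Longrightarrow>
    \<forall>x\<in>P. \<forall>y\<in>P. R_le A x y \<and> R_le A y x \<longrightarrow> x = y \<Longrightarrow>
    \<exists>Q. goodQ Q \<and> card P + 1 \<le> 2 * card Q \<and> (\<forall>q\<in>Q. \<exists>p\<in>P. R_le UNIV q p)"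
proof (induction "card P" arbitrary: P rule: less_induct)
  case less
  note fin = less.prems(1) and ne = less.prems(2) and cmp = less.prems(3) and anti = less.prems(4)
  obtain a where a: "a \<in> P" "\<forall>x\<in>P. R_le A x a" using chain_max[OF fin ne cmp] by blast
  define P' where "P' = P - {a}"
  show ?case
  proof (cases "P' = {}")
    case True
    then have "P = {a}" using a(1) P'_def by auto
    then show ?thesis
      by (intro exI[of _ "{a}"]) (auto simp: goodQ_def R_le_refl)
  next
    case False
    have finP': "finite P'" using fin P'_def by auto
    have cmpP': "\<forall>x\<in>P'. \<forall>y\<in>P'. R_le A x y \<or> R_le A y x" using cmp P'_def by auto
    obtain b where b: "b \<in> P'" "\<forall>x\<in>P'. R_le A x b" using chain_max[OF finP' False cmpP'] by blast
    have bP: "b \<in> P" "b \<noteq> a" using b(1) P'_def by auto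
    have ba: "R_le A b a" using a bP by auto
    have nab: "\<not> R_le A a b" using anti a(1) bP ba by blast
    have cardP': "card P' < card P" "card P = card P' + 1"
      proof -
      have "card P > 0" using fin a(1) card_gt_0_iff by blast
      then show "card P' < card P" "card P = card P' + 1"
        using fin a(1) P'_def by (auto simp: card_Diff_singleton_if)
    qed
    show ?thesis
    proof (cases "R_le UNIV a b")
      case False
      obtain Q' where Q': "goodQ Q'" "card P' + 1 \<le> 2 * card Q'" "\<forall>q\<in>Q'. \<exists>p\<in>P'. R_le UNIV q p"
        using less.hyps[OF cardP'(1) finP' \<open>P' \<noteq> {}\<close> cmpP'] anti P'_def by auto
      have h: "\<forall>q\<in>Q'. R_le UNIV q a \<and> \<not> R_le UNIV a q"
      proof
        fix q assume "q \<in> Q'"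
        then obtain p where p: "p \<in> P'" "R_le UNIV q p" using Q'(3) by blast
        have "R_le UNIV q b" using p b(2) F1[OF A] R_le_trans by blast
        then show "R_le UNIV q a \<and> \<not> R_le UNIV a q"
          using F1[OF A ba] False R_le_trans by blast
      qed
      note gi = goodQ_insert[OF Q'(1) h]
      show ?thesis
      proof (intro exI[of _ "insert a Q'"] conjI)
        show "goodQ (insert a Q')" by (rule gi(1))
        show "card P + 1 \<le> 2 * card (insert a Q')" using gi(3) Q'(2) cardP'(2) by simp
        show "\<forall>q\<in>insert a Q'. \<exists>p\<in>P. R_le UNIV q p"
          using Q'(3) a(1) P'_def R_le_refl by blast
      qed
    next
      case True
      define P'' where "P'' = P' - {b}"
      have cardP'': "card P'' < card P" "card P = card P'' + 2"
        proof -
        have "card P' > 0" using finP' b(1) card_gt_0_iff by blast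
        then show "card P'' < card P" "card P = card P'' + 2"
          using cardP' b(1) finP' P''_def by (auto simp: card_Diff_singleton_if)
      qed
      show ?thesis
      proof (cases "P'' = {}")
        case True
        then have Pab: "P = {a, b}" using P'_def P''_def a(1) b(1) by auto
        obtain d where d: "R_le UNIV d b" "\<not> R_le UNIV b d"
          using F3[OF A ba \<open>R_le UNIV a b\<close> nab] by blast
        have g1: "goodQ {d}" by (simp add: goodQ_def R_le_refl)
        have h: "\<forall>q\<in>{d}. R_le UNIV q a \<and> \<not> R_le UNIV a q"
          using d F1[OF A ba] \<open>R_le UNIV a b\<close> R_le_trans by blast
        note gi = goodQ_insert[OF g1 h]
        show ?thesis
        proof (intro exI[of _ "{a, d}"] conjI)
          show "goodQ {a, d}" by (rule gi(1))
          show "card P + 1 \<le> 2 * card {a, d}" using gi(3) Pab bP(2) by simp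
          show "\<forall>q\<in>{a, d}. \<exists>p\<in>P. R_le UNIV q p"
            using Pab d(1) R_le_refl by auto
        qed
      next
        case False
        have finP'': "finite P''" using finP' P''_def by auto
        have cmpP'': "\<forall>x\<in>P''. \<forall>y\<in>P''. R_le A x y \<or> R_le A y x" using cmpP' P''_def by auto
        obtain c where c: "c \<in> P''" "\<forall>x\<in>P''. R_le A x c" using chain_max[OF finP'' False cmpP''] by blast
        have cP: "c \<in> P" "c \<noteq> b" "c \<in> P'" using c(1) P''_def P'_def by auto
        have cb: "R_le A c b" using b(2) cP(3) by auto
        have nbc: "\<not> R_le A b c" using anti cP bP cb by blast
        have nac: "\<not> R_le UNIV a c" using F2[OF A cb] nbc nab by blast
        obtain Q'' where Q'': "goodQ Q''" "card P'' + 1 \<le> 2 * card Q''" "\<forall>q\<in>Q''. \<exists>p\<in>P''. R_le UNIV q p"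
          using less.hyps[OF cardP''(1) finP'' False cmpP''] anti P'_def P''_def by auto
        have h: "\<forall>q\<in>Q''. R_le UNIV q a \<and> \<not> R_le UNIV a q"
        proof
          fix q assume "q \<in> Q''"
          then obtain p where p: "p \<in> P''" "R_le UNIV q p" using Q''(3) by blast
          have "R_le UNIV q c" using p c(2) F1[OF A] R_le_trans by blast
          then show "R_le UNIV q a \<and> \<not> R_le UNIV a q"
            using F1[OF A cb] F1[OF A ba] nac R_le_trans by blast
        qed
        note gi = goodQ_insert[OF Q''(1) h]
        show ?thesis
        proof (intro exI[of _ "insert a Q''"] conjI)
          show "goodQ (insert a Q'')" by (rule gi(1))
          show "card P + 1 \<le> 2 * card (insert a Q'')" using gi(3) Q''(2) cardP''(2) by simp
          show "\<forall>q\<in>insert a Q''. \<exists>p\<in>P. R_le UNIV q p"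
            using Q''(3) a(1) P'_def P''_def R_le_refl by blast
        qed
      qed
    qed
  qed
qed

lemma R_class_eq: "R_le T a b \<Longrightarrow> R_le T b a \<Longrightarrow> R_class T a = R_class T b"
  unfolding R_class_def using R_le_trans by blast

lemma R_classD: "u \<in> R_class T a \<Longrightarrow> R_le T a u \<and> R_le T u a"
  unfolding R_class_def by blast

lemma R_class_self: "a \<in> T \<Longrightarrow> a \<in> R_class T a"
  unfolding R_class_def by (simp add: R_le_refl)

theorem corollary3p7:
  fixes A :: "'a::semigroup_mult set"
  assumes "R_height (UNIV :: 'a set) \<noteq> \<infinity>"
    and "right_ideal A"
  shows "R_height A \<le> 2 * R_height (UNIV :: 'a set) - 1"
proof -
  note A = assms(2)
  obtain N where N: "R_height (UNIV :: 'a set) = enat N" using assms(1) by (cases "R_height (UNIV :: 'a set)") auto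
  have "R_height A \<le> enat (2*N - 1)" unfolding R_height_def
  proof (rule Sup_least)
    fix x assume "x \<in> {enat (card C) |C. finite C \<and> R_chain A C}"
    then obtain C where C: "x = enat (card C)" "finite C" "R_chain A C" by auto
    show "x \<le> enat (2*N-1)"
    proof (cases "C = {}")
      case True then show ?thesis using C(1) by (simp add: zero_enat_def[symmetric])
    next
      case False
      have "\<forall>X\<in>C. \<exists>r\<in>A. X = R_class A r" using C(3) by (auto simp: R_chain_def R_classes_def)
      then obtain r where r: "\<forall>X\<in>C. r X \<in> A \<and> X = R_class A (r X)" by metis
      define P where "P = r ` C"
      have inj: "inj_on r C" using r by (metis inj_onI)
      have cardP: "card P = card C" using inj P_def card_image by blast
      have finP: "finite P" using C(2) P_def by auto
      have neP: "P \<noteq> {}" using False P_def by auto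
      have cmp: "\<forall>x\<in>P. \<forall>y\<in>P. R_le A x y \<or> R_le A y x"
      proof (intro ballI)
        fix x y assume "x \<in> P" "y \<in> P"
        then obtain X Y where XY: "X \<in> C" "Y \<in> C" "x = r X" "y = r Y" using P_def by auto
        have lem: "R_le A (r X') (r Y')" if "X' \<in> C" "Y' \<in> C" "R_class_le A X' Y'" for X' Y'
        proof -
          from that(3) obtain u v where uv: "u \<in> X'" "v \<in> Y'" "R_le A u v" unfolding R_class_le_def by blast
          have "R_le A (r X') u" using uv(1) r that(1) R_classD by metis
          moreover have "R_le A v (r Y')" using uv(2) r that(2) R_classD by metis
          ultimately show ?thesis using uv(3) R_le_trans by metis
        qed
        have "R_class_le A X Y \<or> R_class_le A Y X" using C(3) XY(1,2) unfolding R_chain_def by blast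
        then show "R_le A x y \<or> R_le A y x" using lem XY by blast
      qed
      have anti: "\<forall>x\<in>P. \<forall>y\<in>P. R_le A x y \<and> R_le A y x \<longrightarrow> x = y"
      proof (intro ballI impI)
        fix x y assume "x \<in> P" "y \<in> P" and h: "R_le A x y \<and> R_le A y x"
        then obtain X Y where XY: "X \<in> C" "Y \<in> C" "x = r X" "y = r Y" using P_def by auto
        have "X = Y" using R_class_eq[of A x y] h XY r by metis
        then show "x = y" using XY by simp
      qed
      obtain Q :: "'a set" where Q: "goodQ Q" "card P + 1 \<le> 2 * card Q"
        using key[OF A finP neP cmp anti] by auto
      define D where "D = R_class (UNIV :: 'a set) ` Q"
      have injD: "inj_on (R_class (UNIV :: 'a set)) Q"
      proof (rule inj_onI)
        fix p q assume "p \<in> Q" "q \<in> Q" "R_class (UNIV :: 'a set) p = R_class UNIV q"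
        then have "p \<in> R_class UNIV q" using R_class_self[of p UNIV] by simp
        then have "R_le UNIV q p \<and> R_le UNIV p q" by (rule R_classD)
        then show "p = q" using Q(1) \<open>p \<in> Q\<close> \<open>q \<in> Q\<close> unfolding goodQ_def by blast
      qed
      have finQ: "finite Q" using Q(1) goodQ_def by blast
      have chD: "R_chain (UNIV :: 'a set) D"
        unfolding R_chain_def
      proof
        show "D \<subseteq> R_classes UNIV" unfolding D_def R_classes_def by auto
        show "\<forall>X\<in>D. \<forall>Y\<in>D. R_class_le UNIV X Y \<or> R_class_le UNIV Y X"
        proof (intro ballI)
          fix X Y assume "X \<in> D" "Y \<in> D"
          then obtain p q where pq: "p \<in> Q" "q \<in> Q" "X = R_class UNIV p" "Y = R_class UNIV q"
            using D_def by auto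
          have "R_le UNIV p q \<or> R_le UNIV q p" using Q(1) pq(1,2) unfolding goodQ_def by blast
          moreover have "p \<in> X" "q \<in> Y" using pq R_class_self by auto
          ultimately show "R_class_le UNIV X Y \<or> R_class_le UNIV Y X"
            unfolding R_class_le_def by blast
        qed
      qed
      have "enat (card D) \<le> R_height (UNIV :: 'a set)"
        unfolding R_height_def
        by (rule Sup_upper) (use chD finQ D_def in auto)
      then have "card Q \<le> N" using N card_image[OF injD] D_def by simp
      then have "card C \<le> 2 * N - 1" using Q(2) cardP by linarith
      then show ?thesis using C(1) by simp
    qed
  qed
  also have "enat (2*N - 1) = 2 * R_height (UNIV :: 'a set) - 1"
    using N by (simp add: numeral_eq_enat one_enat_def)
  finally show ?thesis .
qed

end
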